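(* Assume $a/b>\sqrt2$, $|u|<u_{\max}$ and $a^2+(u^2-2)c^2\ne0$. Let $\mathcal{C}^\dagger$ be the unit circle centered at $f_1=(-c,0)$. Then the radical axis of $\mathcal{C}^\dagger$ and $\mathcal{C}$ is perpendicular to the radical axis of $\mathcal{C}^\dagger$ and $\mathcal{C}'$.
   Context: The elliptic billiard is $\mathcal{E}: x^2/a^2+y^2/b^2=1$, $a>b>0$, $c=\sqrt{a^2-b^2}$, with $a/b>\sqrt2$, and $u_{\max}:=\frac{a}{c^2}\sqrt{a^2-2b^2}$. For parameter $u$ of the self-intersected 4-periodic family, $\mathcal{C}$ is the circle with center $C=\left(0,\frac{c^2u^2-a^2+2b^2}{2b\sqrt{1-u^2}}\right)$ and radius $R=\frac{a^2-c^2u^2}{2b\sqrt{1-u^2}}$ (through the 4-periodic's vertices and the foci), and $\mathcal{C}'$ is the circle with center $C'=\left(0,-\frac{2bc^2\sqrt{1-u^2}}{a^2+(u^2-2)c^2}\right)$ and radius $\left|\frac{c(c^2u^2-a^2)}{a^2+(u^2-2)c^2}\right|$ (through the outer polygon's vertices and the foci). *)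

theory Defs
  imports "HOL-Analysis.Analysis"
begin

definition ell_c :: "real \<Rightarrow> real \<Rightarrow> real" where
  "ell_c a b = sqrt (a\<^sup>2 - b\<^sup>2)"

definition u_max :: "real \<Rightarrow> real \<Rightarrow> real" where
  "u_max a b = a / (ell_c a b)\<^sup>2 * sqrt (a\<^sup>2 - 2 * b\<^sup>2)"

text \<open>Circle C through the 4-periodic's vertices and the foci.\<close>
definition center_C :: "real \<Rightarrow> real \<Rightarrow> real \<Rightarrow> real \<times> real" where
  "center_C a b u = (let c = ell_c a b in
     (0, (c\<^sup>2 * u\<^sup>2 - a\<^sup>2 + 2 * b\<^sup>2) / (2 * b * sqrt (1 - u\<^sup>2))))"

definition radius_C :: "real \<Rightarrow> real \<Rightarrow> real \<Rightarrow> real" where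
  "radius_C a b u = (let c = ell_c a b in
     (a\<^sup>2 - c\<^sup>2 * u\<^sup>2) / (2 * b * sqrt (1 - u\<^sup>2)))"

text \<open>Circle C' through the outer polygon's vertices and the foci.\<close>
definition center_C' :: "real \<Rightarrow> real \<Rightarrow> real \<Rightarrow> real \<times> real" where
  "center_C' a b u = (let c = ell_c a b in
     (0, - (2 * b * c\<^sup>2 * sqrt (1 - u\<^sup>2)) / (a\<^sup>2 + (u\<^sup>2 - 2) * c\<^sup>2)))"

definition radius_C' :: "real \<Rightarrow> real \<Rightarrow> real \<Rightarrow> real" where
  "radius_C' a b u = (let c = ell_c a b in
     \<bar>c * (c\<^sup>2 * u\<^sup>2 - a\<^sup>2) / (a\<^sup>2 + (u\<^sup>2 - 2) * c\<^sup>2)\<bar>)"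

definition power_pt :: "real \<times> real \<Rightarrow> real \<times> real \<Rightarrow> real \<Rightarrow> real" where
  "power_pt X P r = (dist X P)\<^sup>2 - r\<^sup>2"

definition radical_axis :: "real \<times> real \<Rightarrow> real \<Rightarrow> real \<times> real \<Rightarrow> real \<Rightarrow> (real \<times> real) set" where
  "radical_axis P1 r1 P2 r2 = {X. power_pt X P1 r1 = power_pt X P2 r2}"

definition line_pd :: "real \<times> real \<Rightarrow> real \<times> real \<Rightarrow> (real \<times> real) set" where
  "line_pd p d = {p + t *\<^sub>R d | t. True}"

definition perpendicular_lines :: "(real \<times> real) set \<Rightarrow> (real \<times> real) set \<Rightarrow> bool" where
  "perpendicular_lines L M \<longleftrightarrow> (\<exists>p d q e. d \<noteq> 0 \<and> e \<noteq> 0 \<and> L = line_pd p d \<and> M = line_pd q e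
      \<and> inner d e = 0)"

end

theory Submission
  imports Defs
begin

lemma hyper_line:
  fixes n1 n2 k :: real
  assumes "(n1, n2) \<noteq> (0,0)"
  shows "{X::real\<times>real. fst X * n1 + snd X * n2 = k}
     = line_pd ((k/(n1^2+n2^2)) *\<^sub>R (n1,n2)) (-n2, n1)"
proof -
  have N: "n1^2+n2^2 > 0" using assms
    by (metis add_pos_nonneg not_real_square_gt_zero prod.inject sum_power2_gt_zero_iff zero_less_power2)
  have N': "n1*n1+n2*n2 \<noteq> 0" using N unfolding power2_eq_square by linarith
  show ?thesis
  proof (rule set_eqI, rule iffI)
    fix X :: "real\<times>real" assume "X \<in> {X. fst X * n1 + snd X * n2 = k}"
    then have hk: "k = fst X * n1 + snd X * n2" by simp
    obtain x y where X: "X = (x,y)" by fastforce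
    define t where "t = (n1*y - n2*x)/(n1^2+n2^2)"
    define N where "N = n1^2+n2^2"
    have NN: "N \<noteq> 0" using N unfolding N_def by linarith
    have "(k/N)*n1 - t*n2 = (k*n1 - (n1*y-n2*x)*n2)/N"
      unfolding t_def N_def[symmetric] using NN by (simp add: field_simps)
    also have "\<dots> = x" using NN unfolding hk X N_def
      by (simp add: divide_eq_eq algebra_simps power2_eq_square)
    finally have e1: "x = (k/(n1^2+n2^2)) * n1 - t * n2" unfolding N_def by simp
    have "(k/N)*n2 + t*n1 = (k*n2 + (n1*y-n2*x)*n1)/N"
      unfolding t_def N_def[symmetric] using NN by (simp add: field_simps)
    also have "\<dots> = y" using NN unfolding hk X N_def
      by (simp add: divide_eq_eq algebra_simps power2_eq_square)
    finally have e2: "y = (k/(n1^2+n2^2)) * n2 + t * n1" unfolding N_def by simp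
    have "X = (k/(n1^2+n2^2)) *\<^sub>R (n1,n2) + t *\<^sub>R (-n2, n1)"
      using e1 e2 X by simp
    then show "X \<in> line_pd ((k/(n1^2+n2^2)) *\<^sub>R (n1,n2)) (-n2, n1)"
      unfolding line_pd_def by blast
  next
    fix X assume "X \<in> line_pd ((k/(n1^2+n2^2)) *\<^sub>R (n1,n2)) (-n2, n1)"
    then obtain t where "X = (k/(n1^2+n2^2)) *\<^sub>R (n1,n2) + t *\<^sub>R (-n2, n1)"
      unfolding line_pd_def by blast
    then have "fst X * n1 + snd X * n2 = (k/(n1^2+n2^2)) * (n1^2+n2^2)"
      by (simp add: algebra_simps power2_eq_square add_divide_distrib)
    also have "\<dots> = k" using N' by (simp add: power2_eq_square)
    finally show "X \<in> {X. fst X * n1 + snd X * n2 = k}" by simp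
  qed
qed

lemma dist2: "(dist (X::real\<times>real) P)^2 = (fst X - fst P)^2 + (snd X - snd P)^2"
  by (simp add: dist_prod_def dist_real_def)

lemma rad_line:
  fixes pa pb qa qb r s :: real
  assumes "(qa - pa, qb - pb) \<noteq> (0,0)"
  shows "\<exists>p. radical_axis (pa,pb) r (qa,qb) s = line_pd p (-(qb-pb), qa-pa)"
proof -
  define k where "k = ((qa^2+qb^2) - (pa^2+pb^2) - s^2 + r^2)/2"
  have "radical_axis (pa,pb) r (qa,qb) s = {X::real\<times>real. fst X * (qa-pa) + snd X * (qb-pb) = k}"
    unfolding radical_axis_def power_pt_def dist2 k_def
    by (auto simp: dist2 power2_eq_square algebra_simps)
  then show ?thesis using hyper_line[OF assms] by blast
qed

theorem mainTheorem7:
  fixes a b u :: real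
  assumes "a > b" and "b > 0"
    and "a / b > sqrt 2"
    and "\<bar>u\<bar> < u_max a b"
    and "a\<^sup>2 + (u\<^sup>2 - 2) * (ell_c a b)\<^sup>2 \<noteq> 0"
  shows "perpendicular_lines
           (radical_axis (- ell_c a b, 0) 1 (center_C a b u) (radius_C a b u))
           (radical_axis (- ell_c a b, 0) 1 (center_C' a b u) (radius_C' a b u))"
proof -
  define c where "c = ell_c a b"
  have c2: "c^2 = a^2 - b^2" unfolding c_def ell_c_def using assms(1,2) by simp
  have cpos: "c > 0" unfolding c_def ell_c_def using assms(1,2)
    by (simp add: power_strict_mono)
  have "sqrt 2 * b < a" using assms(2,3) by (simp add: field_simps)
  then have "(sqrt 2 * b)^2 < a^2" using assms(2)
    by (intro power_strict_mono) auto
  then have ab2: "2*b^2 < a^2" by (simp add: power_mult_distrib)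
  define w where "w = sqrt (a^2 - 2*b^2)"
  have w2: "w^2 = a^2 - 2*b^2" unfolding w_def using ab2 by simp
  have wnn: "w \<ge> 0" unfolding w_def using ab2 by simp
  have um: "u_max a b = a * w / c^2" unfolding u_max_def w_def c_def by simp
  have e1: "(a*w)^2 = a^2*(a^2-2*b^2)" using w2 by (simp add: power_mult_distrib)
  have e2: "(c^2)^2 = a^2*(a^2-2*b^2) + b^4" unfolding c2 by (simp add: eval_nat_numeral algebra_simps)
  have "(a*w)^2 < (c^2)^2" unfolding e1 e2 using assms(2) by simp
  then have "a*w < c^2" using power2_less_imp_less[of "a*w" "c^2"] by simp
  then have "u_max a b < 1" using um cpos by simp
  then have u1: "u^2 < 1" using assms(4) by (simp add: abs_square_less_1)
  define s where "s = sqrt (1 - u^2)"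
  have spos: "s > 0" unfolding s_def using u1 by simp
  define D where "D = a^2 + (u^2-2)*c^2"
  have Dnz: "D \<noteq> 0" using assms(5) unfolding D_def c_def .
  define y where "y = (c^2*u^2 - a^2 + 2*b^2)/(2*b* s)"
  define y' where "y' = - (2*b*c^2* s)/D"
  have DD: "D = c^2*u^2 - a^2 + 2*b^2" unfolding D_def using c2 by (simp add: algebra_simps)
  have "y = D/(2*b* s)" unfolding y_def DD ..
  then have yy: "y*y' = - (c^2)" unfolding y'_def using spos Dnz assms(2)
    by (simp add: field_simps)
  have C: "center_C a b u = (0, y)" unfolding center_C_def y_def s_def c_def Let_def by simp
  have C': "center_C' a b u = (0, y')" unfolding center_C'_def y'_def s_def c_def D_def Let_def by simp
  obtain p where hp: "radical_axis (-c,0) 1 (0,y) (radius_C a b u) = line_pd p (-(y-0), 0 - -c)"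
    using rad_line[where pa="-c" and pb=0 and qa=0 and qb=y and r=1 and s="radius_C a b u"] cpos by auto
  obtain q where hq: "radical_axis (-c,0) 1 (0,y') (radius_C' a b u) = line_pd q (-(y'-0), 0 - -c)"
    using rad_line[where pa="-c" and pb=0 and qa=0 and qb=y' and r=1 and s="radius_C' a b u"] cpos by auto
  have "inner (-(y-0), 0 - -c) (-(y'-0), 0 - -c) = 0"
    using yy by (simp add: inner_prod_def power2_eq_square)
  moreover have "(-(y-0), 0 - -c) \<noteq> 0" "(-(y'-0), 0 - -c) \<noteq> 0" using cpos
    by (auto simp: zero_prod_def)
  ultimately have "(-(y-0), 0 - -c) \<noteq> 0 \<and> (-(y'-0), 0 - -c) \<noteq> 0 \<and>
      radical_axis (-c,0) 1 (0,y) (radius_C a b u) = line_pd p (-(y-0), 0 - -c) \<and>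
      radical_axis (-c,0) 1 (0,y') (radius_C' a b u) = line_pd q (-(y'-0), 0 - -c) \<and>
      inner (-(y-0), 0 - -c) (-(y'-0), 0 - -c) = 0" using hp hq by simp
  then show ?thesis unfolding perpendicular_lines_def C C' c_def[symmetric] by blast
qed

end
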